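(* Let $(D,\mathrm{left},\mathrm{right})$ be an interval poset with order $\sqsubseteq$, and let $\le$ be the relation on $\max(D)$ given by $a\le b$ iff $a=\mathrm{left}(z)$ and $b=\mathrm{right}(z)$ for some $z\in D$. Then for all $x,y\in D$, $$x\sqsubseteq y\iff \mathrm{left}(x)\le\mathrm{left}(y)\le\mathrm{right}(y)\le\mathrm{right}(x).$$
   Context: For a poset $(D,\sqsubseteq)$, $\max(D)$ is its set of maximal elements and $x\sqcap y$ denotes the infimum of $\{x,y\}$. An interval poset is a poset $D$ with two functions $\mathrm{left},\mathrm{right}:D\to\max(D)$ such that (only the infima named here are assumed to exist): (i) for all $x\in D$, $x=\mathrm{left}(x)\sqcap\mathrm{right}(x)$; (ii) for all $x,y\in D$, if $\mathrm{right}(x)=\mathrm{left}(y)$ then $x\sqcap y$ exists and $\mathrm{left}(x\sqcap y)=\mathrm{left}(x)$, $\mathrm{right}(x\sqcap y)=\mathrm{right}(y)$; (iii) for each $x\in D$ and each $p\in\max(D)$ with $x\sqsubseteq p$, the infima $\mathrm{left}(x)\sqcap p$ and $p\sqcap\mathrm{right}(x)$ exist and $\mathrm{left}(\mathrm{left}(x)\sqcap p)=\mathrm{left}(x)$, $\mathrm{right}(\mathrm{left}(x)\sqcap p)=p$, $\mathrm{left}(p\sqcap\mathrm{right}(x))=p$, $\mathrm{right}(p\sqcap\mathrm{right}(x))=\mathrm{right}(x)$. The relation $\le$ is a partial order on $\max(D)$. *)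

theory Defs
  imports Main
begin

definition partial_order_on' :: "'a set \<Rightarrow> ('a \<Rightarrow> 'a \<Rightarrow> bool) \<Rightarrow> bool" where
  "partial_order_on' D le \<longleftrightarrow>
     (\<forall>x\<in>D. le x x) \<and>
     (\<forall>x\<in>D. \<forall>y\<in>D. le x y \<and> le y x \<longrightarrow> x = y) \<and>
     (\<forall>x\<in>D. \<forall>y\<in>D. \<forall>z\<in>D. le x y \<and> le y z \<longrightarrow> le x z)"

definition is_inf :: "'a set \<Rightarrow> ('a \<Rightarrow> 'a \<Rightarrow> bool) \<Rightarrow> 'a \<Rightarrow> 'a \<Rightarrow> 'a \<Rightarrow> bool" where
  "is_inf D le x y m \<longleftrightarrow> m \<in> D \<and> le m x \<and> le m y \<and>
     (\<forall>z\<in>D. le z x \<and> le z y \<longrightarrow> le z m)"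

definition maxs :: "'a set \<Rightarrow> ('a \<Rightarrow> 'a \<Rightarrow> bool) \<Rightarrow> 'a set" where
  "maxs D le = {p \<in> D. \<forall>q\<in>D. le p q \<longrightarrow> q = p}"

definition interval_poset ::
  "'a set \<Rightarrow> ('a \<Rightarrow> 'a \<Rightarrow> bool) \<Rightarrow> ('a \<Rightarrow> 'a) \<Rightarrow> ('a \<Rightarrow> 'a) \<Rightarrow> bool" where
  "interval_poset D le left right \<longleftrightarrow>
     partial_order_on' D le \<and>
     (\<forall>x\<in>D. left x \<in> maxs D le \<and> right x \<in> maxs D le) \<and>
     (\<forall>x\<in>D. is_inf D le (left x) (right x) x) \<and>
     (\<forall>x\<in>D. \<forall>y\<in>D. right x = left y \<longrightarrow>
        (\<exists>m. is_inf D le x y m \<and> left m = left x \<and> right m = right y)) \<and>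
     (\<forall>x\<in>D. \<forall>p\<in>maxs D le. le x p \<longrightarrow>
        (\<exists>m. is_inf D le (left x) p m \<and> left m = left x \<and> right m = p) \<and>
        (\<exists>m. is_inf D le p (right x) m \<and> left m = p \<and> right m = right x))"

definition max_le :: "'a set \<Rightarrow> ('a \<Rightarrow> 'a) \<Rightarrow> ('a \<Rightarrow> 'a) \<Rightarrow> 'a \<Rightarrow> 'a \<Rightarrow> bool" where
  "max_le D left right a b \<longleftrightarrow> (\<exists>z\<in>D. a = left z \<and> b = right z)"

end

theory Submission
  imports Defs
begin

lemma inf_unique:
  assumes "partial_order_on' D le" "is_inf D le a b m" "is_inf D le a b n"
  shows "m = n"
  using assms unfolding partial_order_on'_def is_inf_def by blast

theorem mainTheorem7:
  assumes "interval_poset D le left right"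
    and "x \<in> D" and "y \<in> D"
  shows "le x y \<longleftrightarrow>
    (max_le D left right (left x) (left y) \<and>
     max_le D left right (left y) (right y) \<and>
     max_le D left right (right y) (right x))"
proof -
  have po: "partial_order_on' D le"
    and mx: "\<And>x. x \<in> D \<Longrightarrow> left x \<in> maxs D le \<and> right x \<in> maxs D le"
    and lr: "\<And>x. x \<in> D \<Longrightarrow> is_inf D le (left x) (right x) x"
    and ii: "\<And>x y. x \<in> D \<Longrightarrow> y \<in> D \<Longrightarrow> right x = left y \<Longrightarrow>
        (\<exists>m. is_inf D le x y m \<and> left m = left x \<and> right m = right y)"
    and iii: "\<And>x p. x \<in> D \<Longrightarrow> p \<in> maxs D le \<Longrightarrow> le x p \<Longrightarrow>
        (\<exists>m. is_inf D le (left x) p m \<and> left m = left x \<and> right m = p) \<and>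
        (\<exists>m. is_inf D le p (right x) m \<and> left m = p \<and> right m = right x)"
    using assms(1) unfolding interval_poset_def by blast+
  have trans: "\<And>a b c. a \<in> D \<Longrightarrow> b \<in> D \<Longrightarrow> c \<in> D \<Longrightarrow> le a b \<Longrightarrow> le b c \<Longrightarrow> le a c"
    using po unfolding partial_order_on'_def by blast
  have maxD: "\<And>p. p \<in> maxs D le \<Longrightarrow> p \<in> D" unfolding maxs_def by blast
  show ?thesis
  proof
    assume xy: "le x y"
    have ly: "left y \<in> maxs D le" and ry: "right y \<in> maxs D le" using mx[OF assms(3)] by auto
    have "le y (left y)" "le y (right y)" using lr[OF assms(3)] unfolding is_inf_def by auto
    hence "le x (left y)" "le x (right y)" using trans xy assms(2,3) maxD ly ry by blast+
    then obtain m1 m2 where "is_inf D le (left x) (left y) m1" "left m1 = left x" "right m1 = left y"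
      "is_inf D le (right y) (right x) m2" "left m2 = right y" "right m2 = right x"
      using iii[OF assms(2) ly] iii[OF assms(2) ry] by blast
    moreover have "m1 \<in> D" "m2 \<in> D" using calculation unfolding is_inf_def by auto
    ultimately show "max_le D left right (left x) (left y) \<and>
     max_le D left right (left y) (right y) \<and>
     max_le D left right (right y) (right x)"
      unfolding max_le_def using assms(3) by metis
  next
    assume "max_le D left right (left x) (left y) \<and>
     max_le D left right (left y) (right y) \<and>
     max_le D left right (right y) (right x)"
    then obtain z1 z3 where z1: "z1 \<in> D" "left z1 = left x" "right z1 = left y"
      and z3: "z3 \<in> D" "left z3 = right y" "right z3 = right x"
      unfolding max_le_def by metis
    obtain w where w: "is_inf D le z1 y w" "left w = left x" "right w = right y"
      using ii[OF z1(1) assms(3)] z1 by metis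
    have wD: "w \<in> D" using w unfolding is_inf_def by auto
    obtain v where v: "is_inf D le w z3 v" "left v = left x" "right v = right x"
      using ii[OF wD z3(1)] w z3 by metis
    have vD: "v \<in> D" using v unfolding is_inf_def by auto
    have "v = x" using inf_unique[OF po lr[OF vD]] lr[OF assms(2)] v by simp
    moreover have "le v w" "le w y" using v w unfolding is_inf_def by auto
    ultimately show "le x y" using trans vD wD assms by blast
  qed
qed

end
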